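(* Let $n, a_1,\ldots,a_n$ be positive integers and let $M=M_{a_1,\ldots,a_n}=\prod_{k=1}^{n}\begin{pmatrix}0&1\\ 1&a_k\end{pmatrix}$ (product from left to right). Then $(a_1,a_2,\ldots,a_n)$ is one of the LLS periods of $M$.
   Context: Let $O=(0,0)$. For vectors $u,v\in\mathbb{R}^2$, $\det(u,v)$ is the determinant of the matrix with columns $u,v$; for points $X,Y$, $XY$ denotes the vector $Y-X$. An integer point is a point of $\mathbb{Z}^2$. All angles considered are convex angles with vertex $O$. The sail of such an angle is defined as follows: take the convex hull of all integer points in the closed angle other than $O$; the sail is the broken line formed by the boundary of this convex hull with the (possibly empty) rays lying on the edges of the angle removed (their endpoints kept). It is oriented from the first edge of the angle to the second. For a broken line $\ldots A_{k-1}A_kA_{k+1}\ldots$ (finite or infinite, vertices being the break points, with $O,A_k,A_{k+1}$ never collinear) its LLS sequence is given by $a_{2k}=\det(OA_k,OA_{k+1})$ for each edge $A_kA_{k+1}$ and $a_{2k-1}=\det(A_kA_{k-1},A_kA_{k+1})/(a_{2k-2}a_{2k})$ for each interior vertex $A_k$. The LLS sequence of an angle is the sequence of absolute values of the LLS sequence of its sail. Let $M\in\mathrm{GL}(2,\mathbb{Z})$ have two distinct real irrational eigenvalues. The complement of the union of its two eigenlines consists of four open cones; the sails of (the closures of) these cones are the sails associated to $M$ (they are bi-infinite broken lines). The LLS sequence of $M$ is the (bi-infinite) LLS sequence of an associated sail; it is known that all associated sails give the same sequence up to a shift of indices. $M^2$ maps each associated sail to itself, shifting its vertices by some number $n'\ge1$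 of positions; any block of $n'$ consecutive entries of the LLS sequence of $M$ is called an LLS period of $M$. *)

theory Defs
  imports "HOL-Analysis.Analysis"
begin

text \<open>Points / vectors of the plane are elements of real^2; integer 2x2 matrices
  are represented as real^2^2 with integer entries.\<close>

definition det2 :: "real^2 \<Rightarrow> real^2 \<Rightarrow> real" where
  "det2 u v = u$1 * v$2 - u$2 * v$1"

definition is_int_point :: "real^2 \<Rightarrow> bool" where
  "is_int_point p \<longleftrightarrow> p$1 \<in> \<int> \<and> p$2 \<in> \<int>"

definition angle_set :: "real^2 \<Rightarrow> real^2 \<Rightarrow> (real^2) set" where
  "angle_set u w = {s *\<^sub>R u + t *\<^sub>R w | s t. 0 \<le> s \<and> 0 \<le> t}"

definition sail_hull :: "real^2 \<Rightarrow> real^2 \<Rightarrow> (real^2) set" where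
  "sail_hull u w = convex hull {p. p \<in> angle_set u w \<and> is_int_point p \<and> p \<noteq> 0}"

definition sail_vertices :: "real^2 \<Rightarrow> real^2 \<Rightarrow> (real^2) set" where
  "sail_vertices u w = {p. p extreme_point_of (sail_hull u w)}"

text \<open>A bi-infinite enumeration A of the vertices of the sail of the angle (u,w),
  oriented from the first edge (u) to the second edge (w): consecutive vertices
  turn in the same rotational sense as u to w.\<close>
definition sail_param :: "real^2 \<Rightarrow> real^2 \<Rightarrow> (int \<Rightarrow> real^2) \<Rightarrow> bool" where
  "sail_param u w A \<longleftrightarrow>
     bij_betw A UNIV (sail_vertices u w) \<and> (\<forall>k. 0 < det2 u w * det2 (A k) (A (k + 1)))"

text \<open>Absolute values of the LLS sequence of the broken line with vertices A:
  entry 2k is det(OA_k, OA_(k+1)), entry 2k-1 is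
  det(A_k A_(k-1), A_k A_(k+1)) / (a_(2k-2) a_(2k)).\<close>
definition lls :: "(int \<Rightarrow> real^2) \<Rightarrow> int \<Rightarrow> real" where
  "lls A j =
     (if even j then \<bar>det2 (A (j div 2)) (A (j div 2 + 1))\<bar>
      else (let k = (j + 1) div 2 in
              \<bar>det2 (A (k - 1) - A k) (A (k + 1) - A k)\<bar> /
              (\<bar>det2 (A (k - 1)) (A k)\<bar> * \<bar>det2 (A k) (A (k + 1))\<bar>)))"

definition distinct_irrational_real_eigenvalues :: "real^2^2 \<Rightarrow> bool" where
  "distinct_irrational_real_eigenvalues M \<longleftrightarrow>
     (\<exists>l m. l \<noteq> m \<and> l \<notin> \<rat> \<and> m \<notin> \<rat> \<and>
        (\<exists>u. u \<noteq> 0 \<and> M *v u = l *\<^sub>R u) \<and> (\<exists>v. v \<noteq> 0 \<and> M *v v = m *\<^sub>R v))"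

text \<open>Closures of the four cones cut out by the eigenlines, as angles with an
  (arbitrary) ordering of their two edges: u, w are real eigenvectors of M that
  are linearly independent (hence on the two different eigenlines).\<close>
definition associated_angle :: "real^2^2 \<Rightarrow> real^2 \<Rightarrow> real^2 \<Rightarrow> bool" where
  "associated_angle M u w \<longleftrightarrow>
     det2 u w \<noteq> 0 \<and> (\<exists>l. M *v u = l *\<^sub>R u) \<and> (\<exists>m. M *v w = m *\<^sub>R w)"

definition lls_period :: "real^2^2 \<Rightarrow> nat list \<Rightarrow> bool" where
  "lls_period M xs \<longleftrightarrow>
     distinct_irrational_real_eigenvalues M \<and>
     (\<exists>u w A d. associated_angle M u w \<and> sail_param u w A \<and> d \<noteq> 0 \<and>
        (\<forall>k. (M ** M) *v A k = A (k + d)) \<and> length xs = nat \<bar>d\<bar> \<and>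
        (\<exists>j. \<forall>i < length xs. lls A (j + int i) = real (xs ! i)))"

definition lls_E :: "nat \<Rightarrow> real^2^2" where
  "lls_E a = (\<chi> i j. if i = 1 then (if j = 1 then 0 else 1)
                      else (if j = 1 then 1 else real a))"

definition lls_matrix :: "nat list \<Rightarrow> real^2^2" where
  "lls_matrix as = foldr (\<lambda>a B. lls_E a ** B) as (mat 1)"

end

theory Submission
  imports Defs
begin

definition vec2 :: "real \<Rightarrow> real \<Rightarrow> real^2" where
  "vec2 x y = (\<chi> i. if i = 1 then x else y)"

lemma vec2_comp[simp]: "vec2 x y $ 1 = x" "vec2 x y $ 2 = y"
  by (auto simp: vec2_def)

lemma vec2_eq_iff: "(p::real^2) = q \<longleftrightarrow> p$1 = q$1 \<and> p$2 = q$2"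
  by (simp add: vec_eq_iff forall_2)

lemma mv_comp: "((M::real^2^2) *v x) $ i = M$i$1 * x$1 + M$i$2 * x$2"
  by (simp add: matrix_vector_mult_def sum_2)

lemma mv_lin: "(M::real^2^2) *v x = x$1 *\<^sub>R (M *v vec2 1 0) + x$2 *\<^sub>R (M *v vec2 0 1)"
  by (simp add: vec2_eq_iff mv_comp)

lemma E_e1: "lls_E a *v vec2 1 0 = vec2 0 1"
  by (simp add: vec2_eq_iff mv_comp lls_E_def)

lemma E_e2: "lls_E a *v vec2 0 1 = vec2 1 0 + real a *\<^sub>R vec2 0 1"
  by (simp add: vec2_eq_iff mv_comp lls_E_def)

lemma foldr_shift: "foldr (\<lambda>a B. lls_E a ** B) xs B = foldr (\<lambda>a B. lls_E a ** B) xs (mat 1) ** B"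
  by (induction xs) (auto simp: matrix_mul_assoc matrix_mul_lid)

lemma foldr_snoc: "foldr (\<lambda>a B. lls_E a ** B) (xs @ [y]) (mat 1) = foldr (\<lambda>a B. lls_E a ** B) xs (mat 1) ** lls_E y"
  using foldr_shift[of xs "lls_E y"] by simp

lemma det2_simps[simp]: "det2 u w = u$1 * w$2 - u$2 * w$1" by (simp add: det2_def)

fun fwd :: "(int \<Rightarrow> real) \<Rightarrow> 'a::real_vector \<Rightarrow> 'a \<Rightarrow> nat \<Rightarrow> 'a \<times> 'a" where
  "fwd g x y 0 = (x, y)"
| "fwd g x y (Suc m) = (snd (fwd g x y m), fst (fwd g x y m) + g (int m + 1) *\<^sub>R snd (fwd g x y m))"

fun bwd :: "(int \<Rightarrow> real) \<Rightarrow> 'a::real_vector \<Rightarrow> 'a \<Rightarrow> nat \<Rightarrow> 'a \<times> 'a" where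
  "bwd g x y 0 = (x, y)"
| "bwd g x y (Suc m) = (snd (bwd g x y m) - g (- int m) *\<^sub>R fst (bwd g x y m), fst (bwd g x y m))"

definition rec2 :: "(int \<Rightarrow> real) \<Rightarrow> 'a::real_vector \<Rightarrow> 'a \<Rightarrow> int \<Rightarrow> 'a" where
  "rec2 g x y k = (if k \<ge> 0 then snd (fwd g x y (nat k)) else fst (bwd g x y (nat (-k-1))))"

lemma rec2_pos: "rec2 g x y (int m) = snd (fwd g x y m)"
  by (simp add: rec2_def)

lemma rec2_negm1: "rec2 g x y (- int m - 1) = fst (bwd g x y m)"
  by (simp add: rec2_def)

lemma rec2_neg: "rec2 g x y (- int m) = snd (bwd g x y m)"
proof (cases m)
  case 0 then show ?thesis by (simp add: rec2_def)
next
  case (Suc j)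
  then have "- int m = - int j - 1" by simp
  then show ?thesis using Suc by (simp only: rec2_negm1) simp
qed

lemma rec2_exists:
  fixes x y :: "'a::real_vector" and g :: "int \<Rightarrow> real"
  shows "\<exists>v. v (-1) = x \<and> v 0 = y \<and> (\<forall>k. v (k+1) = v (k-1) + g (k+1) *\<^sub>R v k)"
proof (intro exI conjI allI)
  show "rec2 g x y (-1) = x" by (simp add: rec2_def)
  show "rec2 g x y 0 = y" by (simp add: rec2_def)
  fix k :: int
  show "rec2 g x y (k+1) = rec2 g x y (k-1) + g (k+1) *\<^sub>R rec2 g x y k"
  proof (cases "k \<ge> 1")
    case True
    define m where "m = nat (k - 1)"
    have m: "k = int m + 1" using True by (simp add: m_def)
    have "rec2 g x y (int (Suc (Suc m))) = rec2 g x y (int m) + g (int (Suc (Suc m))) *\<^sub>R rec2 g x y (int (Suc m))"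
      by (simp only: rec2_pos) simp
    then show ?thesis using m by (simp add: add.commute)
  next
    case False
    show ?thesis
    proof (cases "k = 0")
      case True then show ?thesis by (simp add: rec2_def)
    next
      case False
      define m where "m = nat (- k - 1)"
      have m: "k = - int m - 1" using False \<open>\<not> k \<ge> 1\<close> by (simp add: m_def)
      have e1: "rec2 g x y (- int (Suc m) - 1) = rec2 g x y (- int m) - g (- int m) *\<^sub>R rec2 g x y (- int m - 1)"
        by (simp only: rec2_negm1 rec2_neg) simp
      show ?thesis using e1 unfolding m by (simp add: algebra_simps)
    qed
  qed
qed

lemma per_mult:
  fixes b :: "int \<Rightarrow> 'a"
  assumes "\<forall>k. b (k + int n) = b k"
  shows "b (k + int n * q) = b k"
proof -
  have "\<forall>k. b (k + int n * q) = b k"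
  proof (induction q rule: int_induct[where k=0])
    case base then show ?case by simp
  next
    case (step1 i)
    show ?case
    proof
      fix k
      have "b (k + int n * (i+1)) = b ((k + int n) + int n * i)" by (simp add: algebra_simps)
      also have "\<dots> = b k" using step1 assms by simp
      finally show "b (k + int n * (i+1)) = b k" .
    qed
  next
    case (step2 i)
    show ?case
    proof
      fix k
      have "b (k + int n * (i-1)) = b ((k - int n) + int n * i)" by (simp add: algebra_simps)
      also have "\<dots> = b (k - int n)" using step2 by simp
      also have "\<dots> = b k" using assms[rule_format, of "k - int n"] by simp
      finally show "b (k + int n * (i-1)) = b k" .
    qed
  qed
  then show ?thesis by simp
qed

fun Gf :: "(int \<Rightarrow> nat) \<Rightarrow> nat \<Rightarrow> int \<Rightarrow> real \<Rightarrow> real" where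
  "Gf b 0 j x = x"
| "Gf b (Suc m) j x = real (b j) + 1 / Gf b m (j+1) x"

lemma Gf_pos: "\<forall>k. b k \<ge> 1 \<Longrightarrow> x > 0 \<Longrightarrow> Gf b m j x > 0"
  by (induction m arbitrary: j) (auto intro!: add_nonneg_pos)

lemma Gf_gt1: "\<forall>k. b k \<ge> 1 \<Longrightarrow> x > 0 \<Longrightarrow> m > 0 \<Longrightarrow> Gf b m j x > 1"
proof (cases m)
  case (Suc m')
  assume a: "\<forall>k. b k \<ge> 1" "x > 0"
  have "Gf b m' (j+1) x > 0" using Gf_pos a by blast
  moreover have "real (b j) \<ge> 1" using a by simp
  moreover have "1 / Gf b m' (j+1) x > 0" using calculation by simp
  ultimately show ?thesis unfolding Suc Gf.simps by linarith
qed simp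

lemma Gf_ge1: "\<forall>k. b k \<ge> 1 \<Longrightarrow> x \<ge> 1 \<Longrightarrow> Gf b m j x \<ge> 1"
  using Gf_gt1[of b x m j] by (cases m) auto

lemma Gf_le: "\<forall>k. b k \<ge> 1 \<Longrightarrow> x \<ge> 1 \<Longrightarrow> Gf b (Suc m) j x \<le> real (b j) + 1"
proof -
  assume a: "\<forall>k. b k \<ge> 1" "x \<ge> 1"
  have "Gf b m (j+1) x \<ge> 1" using Gf_ge1 a by blast
  then have "1 / Gf b m (j+1) x \<le> 1" by simp
  then show ?thesis by simp
qed

lemma Gf_cont: "\<forall>k. b k \<ge> 1 \<Longrightarrow> continuous_on {1..B} (Gf b m j)"
proof (induction m arbitrary: j)
  case 0 then show ?case by (simp add: continuous_on_id)
next
  case (Suc m)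
  have "continuous_on {1..B} (\<lambda>x. real (b j) + 1 / Gf b m (j+1) x)"
    apply (intro continuous_intros Suc.IH[OF Suc.prems])
    using Gf_ge1[OF Suc.prems] by (metis atLeastAtMost_iff not_one_le_zero)
  then show ?case by simp
qed

lemma Gf_per: "\<forall>k. b (k + int n) = b k \<Longrightarrow> Gf b m (j + int n * q) x = Gf b m j x"
proof (induction m arbitrary: j)
  case (Suc m)
  assume p: "\<forall>k. b (k + int n) = b k"
  have e: "j + int n * q + 1 = (j + 1) + int n * q" by simp
  show ?case by (simp only: Gf.simps e Suc.IH[OF p, of "j+1"] per_mult[OF p, of j q])
qed simp

lemma cf_exists:
  fixes b :: "int \<Rightarrow> nat"
  assumes n: "n > 0" and per: "\<forall>k. b (k + int n) = b k" and pos: "\<forall>k. b k \<ge> 1"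
  shows "\<exists>\<alpha>. (\<forall>k. 1 < \<alpha> k) \<and> (\<forall>k. \<alpha> k = real (b k) + 1 / \<alpha> (k+1)) \<and> (\<forall>k. \<alpha> (k + int n) = \<alpha> k)"
proof -
  define F where "F = Gf b n 1"
  define B where "B = real (b 1) + 2"
  obtain n' where n': "n = Suc n'" using n by (cases n) auto
  have F1: "F 1 > 1" unfolding F_def using Gf_gt1[OF pos, of 1 n 1] n by simp
  have FB: "F B \<le> real (b 1) + 1" unfolding F_def n' using Gf_le[OF pos, of B n' 1] B_def by simp
  have cont: "continuous_on {1..B} (\<lambda>x. x - F x)"
    unfolding F_def by (intro continuous_intros Gf_cont[OF pos])
  have B1: "1 \<le> B" unfolding B_def by simp
  obtain xs where xs: "1 \<le> xs" "xs \<le> B" "xs - F xs = 0"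
    using IVT'[of "\<lambda>x. x - F x" 1 0 B, OF _ _ B1 cont] F1 FB B_def by auto
  have xs1: "xs > 1" using xs F1 by (cases "xs = 1") auto
  have Fx: "Gf b n 1 xs = xs" using xs F_def by simp
  define \<alpha> where "\<alpha> k = Gf b (n - nat ((k-1) mod int n)) k xs" for k
  show ?thesis
  proof (intro exI conjI allI)
    fix k
    have "(k-1) mod int n < int n" using n by simp
    moreover have "(k-1) mod int n \<ge> 0" using n by simp
    ultimately have "n - nat ((k-1) mod int n) > 0" by (simp add: nat_less_iff)
    then show "1 < \<alpha> k" unfolding \<alpha>_def using Gf_gt1[OF pos] xs1 by simp
  next
    fix k
    have "(k + int n - 1) mod int n = (k - 1) mod int n"
      by (metis add.commute add_diff_eq mod_add_self2)
    then show "\<alpha> (k + int n) = \<alpha> k" unfolding \<alpha>_def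
      using Gf_per[OF per, of _ k 1] by simp
  next
    fix k
    define r where "r = (k-1) mod int n"
    have r: "0 \<le> r" "r < int n" using n by (auto simp: r_def)
    have kr: "k - 1 = int n * ((k-1) div int n) + r" by (simp add: r_def)
    show "\<alpha> k = real (b k) + 1 / \<alpha> (k+1)"
    proof (cases "r + 1 < int n")
      case True
      have kk: "k = int n * ((k-1) div int n) + (r + 1)" using kr by linarith
      have "k mod int n = (int n * ((k-1) div int n) + (r + 1)) mod int n"
        using kk by simp
      also have "\<dots> = r + 1" using True r by simp
      finally have km: "k mod int n = r + 1" .
      have e: "n - nat r = Suc (n - nat (r+1))" using True r by linarith
      show ?thesis unfolding \<alpha>_def r_def[symmetric] using km e by simp
    next
      case False
      then have rr: "r = int n - 1" using r by simp
      have k1: "k + 1 = 1 + int n * ((k-1) div int n + 1)" using kr rr by (simp add: algebra_simps)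
      have kk: "k = int n * ((k-1) div int n + 1)" using kr rr by (simp add: algebra_simps)
      have km: "k mod int n = 0" by (subst kk) simp
      have e: "n - nat r = Suc 0" using rr n by simp
      have "\<alpha> (k+1) = Gf b n (k+1) xs" unfolding \<alpha>_def using km by simp
      also have "\<dots> = Gf b n 1 xs" unfolding k1 using Gf_per[OF per] by simp
      also have "\<dots> = xs" using Fx .
      finally show ?thesis unfolding \<alpha>_def r_def[symmetric] using e by simp
    qed
  qed
qed

lemma mono_int_less:
  fixes f :: "int \<Rightarrow> real"
  assumes "\<And>k. f k < f (k+1)" and "i < j"
  shows "f i < f j"
proof -
  have "\<forall>i. i < j \<longrightarrow> j - i = int m \<longrightarrow> f i < f j" for m
  proof (induction m)
    case 0 then show ?case by simp
  next
    case (Suc m)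
    show ?case
    proof (intro allI impI)
      fix i assume "i < j" "j - i = int (Suc m)"
      show "f i < f j"
      proof (cases "i + 1 = j")
        case True then show ?thesis using assms(1)[of i] by simp
      next
        case False
        then have "f (i+1) < f j" using Suc.IH \<open>i < j\<close> \<open>j - i = int (Suc m)\<close> by auto
        then show ?thesis using assms(1)[of i] by simp
      qed
    qed
  qed
  moreover have "j - i = int (nat (j - i))" using assms(2) by simp
  ultimately show ?thesis using assms(2) by blast
qed

lemma mono_int_le:
  fixes f :: "int \<Rightarrow> real"
  assumes "\<And>k. f k < f (k+1)" and "i \<le> j"
  shows "f i \<le> f j"
  using mono_int_less[of f i j] assms by (cases "i = j") auto

lemma discrete_ivt:
  fixes f :: "int \<Rightarrow> real"
  assumes "f i \<le> 0" "f j > 0" "i < j"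
  shows "\<exists>k. f k \<le> 0 \<and> f (k+1) > 0"
proof -
  have "\<forall>i. f i \<le> 0 \<longrightarrow> j - i = int m \<longrightarrow> (\<exists>k. f k \<le> 0 \<and> f (k+1) > 0)" for m
  proof (induction m)
    case 0 then show ?case using assms by auto
  next
    case (Suc m)
    show ?case
    proof (intro allI impI)
      fix i assume i: "f i \<le> 0" "j - i = int (Suc m)"
      show "\<exists>k. f k \<le> 0 \<and> f (k+1) > 0"
      proof (cases "f (i+1) > 0")
        case True then show ?thesis using i by blast
      next
        case False
        have "j - (i+1) = int m" using i by simp
        moreover have "f (i+1) \<le> 0" using False by simp
        ultimately show ?thesis using Suc.IH by blast
      qed
    qed
  qed
  moreover have "j - i = int (nat (j - i))" using assms(3) by simp
  ultimately show ?thesis using assms by blast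
qed

locale bseq =
  fixes b :: "int \<Rightarrow> nat" and n :: nat
  assumes n_pos: "n > 0" and per: "\<forall>k. b (k + int n) = b k" and bpos: "\<forall>k. b k \<ge> 1"
begin

definition vv :: "int \<Rightarrow> real^2" where
  "vv = (SOME v. v (-1) = vec2 1 0 \<and> v 0 = vec2 0 1 \<and> (\<forall>k. v (k+1) = v (k-1) + real (b (k+1)) *\<^sub>R v k))"

lemma vv: "vv (-1) = vec2 1 0" "vv 0 = vec2 0 1" "vv (k+1) = vv (k-1) + real (b (k+1)) *\<^sub>R vv k"
proof -
  have "\<exists>v. v (-1) = vec2 1 0 \<and> v 0 = vec2 0 1 \<and> (\<forall>k. v (k+1) = v (k-1) + real (b (k+1)) *\<^sub>R v k)"
    using rec2_exists[of "vec2 1 0" "vec2 0 1" "\<lambda>k. real (b k)"] by simp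
  from someI_ex[OF this] show "vv (-1) = vec2 1 0" "vv 0 = vec2 0 1" "vv (k+1) = vv (k-1) + real (b (k+1)) *\<^sub>R vv k"
    unfolding vv_def by blast+
qed

lemma vv_down: "vv (k-1) = vv (k+1) - real (b (k+1)) *\<^sub>R vv k"
  using vv(3)[of k] by simp

definition al :: "int \<Rightarrow> real" where
  "al = (SOME \<alpha>. (\<forall>k. 1 < \<alpha> k) \<and> (\<forall>k. \<alpha> k = real (b k) + 1 / \<alpha> (k+1)) \<and> (\<forall>k. \<alpha> (k + int n) = \<alpha> k))"

lemma al: "1 < al k" "al k = real (b k) + 1 / al (k+1)" "al (k + int n) = al k"
proof -
  have "\<exists>\<alpha>. (\<forall>k. 1 < \<alpha> k) \<and> (\<forall>k. \<alpha> k = real (b k) + 1 / \<alpha> (k+1)) \<and> (\<forall>k. \<alpha> (k + int n) = \<alpha> k)"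
    using cf_exists[OF n_pos per bpos] .
  from someI_ex[OF this] have h: "(\<forall>k. 1 < al k) \<and> (\<forall>k. al k = real (b k) + 1 / al (k+1)) \<and> (\<forall>k. al (k + int n) = al k)"
    unfolding al_def .
  show "1 < al k" using h[THEN conjunct1] by (rule spec)
  show "al k = real (b k) + 1 / al (k+1)" using h[THEN conjunct2, THEN conjunct1] by (rule spec)
  show "al (k + int n) = al k" using h[THEN conjunct2, THEN conjunct2] by (rule spec)
qed

definition be :: "int \<Rightarrow> real" where
  "be = (SOME \<beta>. (\<forall>k. 1 < \<beta> k) \<and> (\<forall>k. \<beta> k = real (b (k+1)) + 1 / \<beta> (k-1)) \<and> (\<forall>k. \<beta> (k + int n) = \<beta> k))"

lemma be: "1 < be k" "be k = real (b (k+1)) + 1 / be (k-1)" "be (k + int n) = be k"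
proof -
  have per': "\<forall>k. b (1 - (k + int n)) = b (1 - k)"
  proof
    fix k show "b (1 - (k + int n)) = b (1 - k)" using per[rule_format, of "1 - (k + int n)"] by simp
  qed
  have ex: "\<exists>\<gamma>. (\<forall>k. 1 < \<gamma> k) \<and> (\<forall>k. \<gamma> k = real (b (1 - k)) + 1 / \<gamma> (k+1)) \<and> (\<forall>k. \<gamma> (k + int n) = \<gamma> k)"
    by (rule cf_exists[OF n_pos]) (use per' bpos in auto)
  from ex obtain \<gamma> where g0: "(\<forall>k. 1 < \<gamma> k) \<and> (\<forall>k. \<gamma> k = real (b (1 - k)) + 1 / \<gamma> (k+1)) \<and> (\<forall>k. \<gamma> (k + int n) = \<gamma> k)"
    by (rule exE)
  note g = g0[THEN conjunct1] g0[THEN conjunct2, THEN conjunct1] g0[THEN conjunct2, THEN conjunct2]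
  have "\<exists>\<beta>. (\<forall>k. 1 < \<beta> k) \<and> (\<forall>k. \<beta> k = real (b (k+1)) + 1 / \<beta> (k-1)) \<and> (\<forall>k. \<beta> (k + int n) = \<beta> k)"
  proof (intro exI[of _ "\<lambda>k. \<gamma> (-k)"] conjI allI)
    fix k
    show "1 < \<gamma> (-k)" using g(1) by blast
    show "\<gamma> (-k) = real (b (k+1)) + 1 / \<gamma> (-(k-1))" using g(2)[rule_format, of "-k"] by (simp add: add.commute)
    show "\<gamma> (-(k + int n)) = \<gamma> (-k)" using g(3)[rule_format, of "-k - int n"] by simp
  qed
  from someI_ex[OF this] have h: "(\<forall>k. 1 < be k) \<and> (\<forall>k. be k = real (b (k+1)) + 1 / be (k-1)) \<and> (\<forall>k. be (k + int n) = be k)"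
    unfolding be_def .
  show "1 < be k" using h[THEN conjunct1] by (rule spec)
  show "be k = real (b (k+1)) + 1 / be (k-1)" using h[THEN conjunct2, THEN conjunct1] by (rule spec)
  show "be (k + int n) = be k" using h[THEN conjunct2, THEN conjunct2] by (rule spec)
qed

end

context bseq begin

definition "a1 = al 1"
definition "bm = be (-1)"
definition phi :: "real^2 \<Rightarrow> real" where "phi x = x$1 + bm * x$2"
definition psi :: "real^2 \<Rightarrow> real" where "psi x = x$1 - x$2 / a1"
definition "c k = phi (vv k)"
definition "d k = psi (vv k)"

lemma al_pos: "al k > 0" using al(1)[of k] by simp
lemma be_pos: "be k > 0" using be(1)[of k] by simp
lemma a1_gt: "a1 > 1" unfolding a1_def using al(1) .
lemma bm_gt: "bm > 1" unfolding bm_def using be(1) .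

lemma phi_lin[simp]: "phi (x + y) = phi x + phi y" "phi (x - y) = phi x - phi y" "phi (t *\<^sub>R x) = t * phi x"
  "phi (- x) = - phi x" "phi 0 = 0"
  by (auto simp: phi_def algebra_simps)
lemma psi_lin[simp]: "psi (x + y) = psi x + psi y" "psi (x - y) = psi x - psi y" "psi (t *\<^sub>R x) = t * psi x"
  "psi (- x) = - psi x" "psi 0 = 0"
  by (auto simp: psi_def algebra_simps diff_divide_distrib add_divide_distrib)

lemma c_rec: "c (k+1) = c (k-1) + real (b (k+1)) * c k"
  unfolding c_def vv(3)[of k] by simp
lemma d_rec: "d (k+1) = d (k-1) + real (b (k+1)) * d k"
  unfolding d_def vv(3)[of k] by simp

lemma c_m1: "c (-1) = 1" unfolding c_def vv phi_def by simp
lemma c_0: "c 0 = bm" unfolding c_def vv phi_def by simp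
lemma d_m1: "d (-1) = 1" unfolding d_def vv psi_def by simp
lemma d_0: "d 0 = - 1 / a1" unfolding d_def vv psi_def by simp

lemma c_ratio0: "c k = be (k-1) * c (k-1)"
proof (induction k rule: int_induct[where k=0])
  case base then show ?case using c_m1 c_0 bm_def by simp
next
  case (step1 i)
  have r: "c (i+1) = c (i-1) + real (b (i+1)) * c i" by (rule c_rec)
  have e: "c (i-1) = c i / be (i-1)" using step1(2) be_pos[of "i-1"] by (simp add: field_simps)
  have b: "be i = real (b (i+1)) + 1 / be (i-1)" by (rule be(2))
  have "c (i+1) = be i * c i" unfolding r e b by (simp add: field_simps)
  then show ?case by simp
next
  case (step2 i)
  have r: "c i = c (i-2) + real (b i) * c (i-1)" using c_rec[of "i-1"] by simp
  have b: "be (i-1) = real (b i) + 1 / be (i-2)" using be(2)[of "i-1"] by simp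
  have "c (i-2) = c (i-1) * (be (i-1) - real (b i))" using r step2(2) by (simp add: algebra_simps)
  also have "\<dots> = c (i-1) / be (i-2)" using b by simp
  finally have "c (i-1) = be (i-2) * c (i-2)" using be_pos[of "i-2"] by (simp add: field_simps)
  then show ?case by (simp add: algebra_simps)
qed

lemma c_ratio: "c (k+1) = be k * c k"
  using c_ratio0[of "k+1"] by simp

lemma c_pos: "c k > 0"
proof (induction k rule: int_induct[where k="-1"])
  case base then show ?case using c_m1 by simp
next
  case (step1 i) then show ?case using c_ratio[of i] be_pos[of i] by simp
next
  case (step2 i)
  have "c i = be (i-1) * c (i-1)" using c_ratio[of "i-1"] by simp
  then show ?case using step2(2) be_pos[of "i-1"] by (simp add: zero_less_mult_iff)
qed

lemma c_inc: "c k < c (k+1)"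
  using c_ratio[of k] be(1)[of k] c_pos[of k] by simp

lemma d_ratio0: "d k = - d (k-1) / al (k+1)"
proof (induction k rule: int_induct[where k=0])
  case base then show ?case using d_m1 d_0 a1_def by simp
next
  case (step1 i)
  have r: "d (i+1) = d (i-1) + real (b (i+1)) * d i" by (rule d_rec)
  have e: "d (i-1) = - al (i+1) * d i" using step1(2) al_pos[of "i+1"] by (simp add: field_simps)
  have a: "al (i+1) = real (b (i+1)) + 1 / al (i+2)" using al(2)[of "i+1"] by (simp add: add.assoc)
  have "d (i+1) = - d i / al (i+2)" unfolding r e a by (simp add: field_simps)
  then show ?case by (simp add: add.assoc)
next
  case (step2 i)
  have r: "d i = d (i-2) + real (b i) * d (i-1)" using d_rec[of "i-1"] by simp
  have a: "al i = real (b i) + 1 / al (i+1)" by (rule al(2))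
  have "d (i-2) = d i - real (b i) * d (i-1)" using r by simp
  also have "\<dots> = - d (i-1) / al (i+1) - real (b i) * d (i-1)" using step2(2) by simp
  also have "\<dots> = - d (i-1) * al i" unfolding a by (simp add: algebra_simps)
  finally have "d (i-1) = - d (i-2) / al i" using al_pos[of i] by (simp add: field_simps)
  then show ?case by simp
qed

lemma d_ratio: "d (k+1) = - d k / al (k+2)"
  using d_ratio0[of "k+1"] by (simp add: add.assoc)

lemma d_sign: "if even k then d k < 0 else d k > 0"
proof (induction k rule: int_induct[where k="-1"])
  case base then show ?case using d_m1 by simp
next
  case (step1 i) then show ?case using d_ratio[of i] al_pos[of "i+2"]
    by (auto simp: divide_neg_pos divide_pos_pos split: if_splits)
next
  case (step2 i)
  have "d (i-1) = - al (i+1) * d i" using d_ratio0[of i] al_pos[of "i+1"] by (simp add: field_simps)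
  then show ?case using step2(2) al_pos[of "i+1"]
    by (auto simp: mult_pos_neg mult_neg_neg split: if_splits)
qed

lemma d_abs_ratio: "\<bar>d (k+1)\<bar> = \<bar>d k\<bar> / al (k+2)"
  using d_ratio[of k] al_pos[of "k+2"] by (simp add: abs_divide)

lemma d_dec: "\<bar>d (k+1)\<bar> < \<bar>d k\<bar>"
proof -
  have "d k \<noteq> 0" using d_sign[of k] by (auto split: if_splits)
  then show ?thesis using d_abs_ratio[of k] al(1)[of "k+2"] by (simp add: divide_less_eq)
qed

lemma d_abs_rec: "\<bar>d (k-1)\<bar> = \<bar>d (k+1)\<bar> + real (b (k+1)) * \<bar>d k\<bar>"
proof -
  have "\<bar>d k\<bar> = \<bar>d (k-1)\<bar> / al (k+1)" using d_abs_ratio[of "k-1"] by (simp add: add.commute)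
  then have e: "\<bar>d (k-1)\<bar> = al (k+1) * \<bar>d k\<bar>" using al_pos[of "k+1"] by (simp add: field_simps)
  have a: "al (k+1) = real (b (k+1)) + 1 / al (k+2)" using al(2)[of "k+1"] by (simp add: add.assoc)
  show ?thesis unfolding e a d_abs_ratio by (simp add: algebra_simps)
qed

lemma det_v: "det2 (vv k) (vv (k+1)) = (if even k then -1 else 1)"
proof (induction k rule: int_induct[where k="-1"])
  case base then show ?case using vv by simp
next
  case (step1 i)
  have "det2 (vv (i+1)) (vv (i+1+1)) = - det2 (vv i) (vv (i+1))"
    unfolding vv(3)[of "i+1"] by (simp add: algebra_simps)
  then show ?case using step1(2) by (simp del: det2_simps)
next
  case (step2 i)
  have "det2 (vv (i-1)) (vv (i-1+1)) = - det2 (vv i) (vv (i+1))"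
    unfolding vv_down[of i] by (simp add: algebra_simps)
  then show ?case using step2(2) by (simp del: det2_simps)
qed

lemma int_point_comb: "is_int_point p \<Longrightarrow> is_int_point q \<Longrightarrow> x \<in> \<int> \<Longrightarrow> is_int_point (p + x *\<^sub>R q)"
  "is_int_point p \<Longrightarrow> is_int_point q \<Longrightarrow> x \<in> \<int> \<Longrightarrow> is_int_point (p - x *\<^sub>R q)"
  by (auto simp: is_int_point_def)

lemma vv_int: "is_int_point (vv k)"
proof -
  have "is_int_point (vv k) \<and> is_int_point (vv (k-1))"
  proof (induction k rule: int_induct[where k=0])
    case base then show ?case using vv by (simp add: is_int_point_def)
  next
    case (step1 i) then show ?case using vv(3)[of i] int_point_comb(1)[of "vv (i-1)" "vv i" "real (b (i+1))"] by simp
  next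
    case (step2 i) then show ?case using vv_down[of "i-1"] int_point_comb(2)[of "vv i" "vv (i-1)" "real (b i)"] by simp
  qed
  then show ?thesis by simp
qed

end

lemma rat_root_int:
  fixes x :: real
  assumes x: "x \<in> \<rat>" and eq: "x^2 - of_int T * x + of_int D = 0"
  shows "x \<in> \<int>"
proof -
  obtain a b where ab: "b > 0" "coprime a b" "x = of_int a / of_int b" using Rats_cases'[OF x] by blast
  have "real_of_int (a^2 - T*a*b + D*b^2) = real_of_int b ^ 2 * (x^2 - of_int T * x + of_int D)"
    using ab(1) unfolding ab(3) by (simp add: field_simps power2_eq_square)
  also have "\<dots> = 0" using eq by simp
  finally have "a^2 - T*a*b + D*b^2 = 0" by (simp only: of_int_eq_0_iff)
  then have "a^2 = b * (T*a - D*b)" by (simp add: algebra_simps power2_eq_square)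
  then have "b dvd a^2" by simp
  moreover have "coprime (a^2) b" using ab(2) by simp
  ultimately have "is_unit b" using coprime_absorb_right by blast
  then have "b = 1" using ab(1) by simp
  then show ?thesis using ab(3) by simp
qed

lemma Ints_abs_lt1: "x \<in> \<int> \<Longrightarrow> \<bar>x\<bar> < 1 \<Longrightarrow> x = (0::real)"
  by (auto elim!: Ints_cases)

lemma Ints_ge1: "x \<in> \<int> \<Longrightarrow> x > 0 \<Longrightarrow> x \<ge> (1::real)"
  by (auto elim!: Ints_cases)

context bseq begin

definition "p0 = vv (int n - 1)"
definition "r0 = vv (int n)"
definition Mop :: "real^2 \<Rightarrow> real^2" where "Mop x = x$1 *\<^sub>R p0 + x$2 *\<^sub>R r0"
definition "nu = c (int n - 1)"
definition "mu = d (int n - 1)"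

lemma Mop_lin[simp]: "Mop (x + y) = Mop x + Mop y" "Mop (x - y) = Mop x - Mop y" "Mop (t *\<^sub>R x) = t *\<^sub>R Mop x"
  by (auto simp: Mop_def algebra_simps)

lemma c_n: "c (int n) = bm * nu"
proof -
  have "c (int n) = be (int n - 1) * c (int n - 1)" using c_ratio[of "int n - 1"] by simp
  moreover have "be (int n - 1) = bm" using be(3)[of "-1"] bm_def by (simp add: add.commute)
  ultimately show ?thesis by (simp add: nu_def)
qed

lemma d_n: "d (int n) = - mu / a1"
proof -
  have "d (int n) = - d (int n - 1) / al (int n + 1)" using d_ratio[of "int n - 1"] by (simp add: add.commute)
  moreover have "al (int n + 1) = a1" using al(3)[of 1] a1_def by (simp add: add.commute)
  ultimately show ?thesis by (simp add: mu_def)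
qed

lemma phi_M: "phi (Mop x) = nu * phi x"
  using c_n by (simp add: Mop_def p0_def r0_def c_def[symmetric] nu_def[symmetric]) (simp add: phi_def algebra_simps)

lemma psi_M: "psi (Mop x) = mu * psi x"
  using d_n by (simp add: Mop_def p0_def r0_def d_def[symmetric] mu_def[symmetric]) (simp add: psi_def algebra_simps)

lemma uniq: "phi z = 0 \<Longrightarrow> psi z = 0 \<Longrightarrow> z = 0"
proof -
  assume a: "phi z = 0" "psi z = 0"
  have "(bm + 1/a1) * z$2 = phi z - psi z" by (simp add: phi_def psi_def algebra_simps)
  also have "\<dots> = 0" using a by simp
  moreover have "bm + 1/a1 > 0" using bm_gt a1_gt by (simp add: add_pos_pos)
  ultimately have "z$2 = 0" by simp
  then have "z$1 = 0" using a by (simp add: phi_def)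
  then show "z = 0" using \<open>z$2 = 0\<close> by (simp add: vec2_eq_iff)
qed

lemma eig_psi0: "psi q = 0 \<Longrightarrow> Mop q = nu *\<^sub>R q"
proof -
  assume "psi q = 0"
  then have "phi (Mop q - nu *\<^sub>R q) = 0" "psi (Mop q - nu *\<^sub>R q) = 0" using phi_M psi_M by simp_all
  then have "Mop q - nu *\<^sub>R q = 0" using uniq by blast
  then show ?thesis by simp
qed

lemma eig_phi0: "phi q = 0 \<Longrightarrow> Mop q = mu *\<^sub>R q"
proof -
  assume "phi q = 0"
  then have "phi (Mop q - mu *\<^sub>R q) = 0" "psi (Mop q - mu *\<^sub>R q) = 0" using phi_M psi_M by simp_all
  then have "Mop q - mu *\<^sub>R q = 0" using uniq by blast
  then show ?thesis by simp
qed

lemma vper: "vv (k + int n) = Mop (vv k)"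
proof -
  have "vv (k - 1 + int n) = Mop (vv (k-1)) \<and> vv (k + int n) = Mop (vv k)"
  proof (induction k rule: int_induct[where k=0])
    case base then show ?case by (simp add: vv Mop_def p0_def r0_def add.commute)
  next
    case (step1 i)
    have bb: "b (i + int n + 1) = b (i + 1)" using per[rule_format, of "i+1"] by (simp add: algebra_simps)
    have "vv (i + 1 + int n) = vv (i + int n + 1)" by (simp add: algebra_simps)
    also have "\<dots> = vv (i - 1 + int n) + real (b (i+1)) *\<^sub>R vv (i + int n)"
      using vv(3)[of "i + int n"] bb by (simp add: algebra_simps)
    also have "\<dots> = Mop (vv (i+1))" using step1(2) vv(3)[of i] by simp
    finally show ?case using step1(2) by simp
  next
    case (step2 i)
    have bb: "b (i + int n) = b i" using per by simp
    have "vv (i - 1 - 1 + int n) = vv (i - 1 + int n - 1)" by (simp add: algebra_simps)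
    also have "\<dots> = vv (i + int n) - real (b i) *\<^sub>R vv (i - 1 + int n)"
      using vv_down[of "i - 1 + int n"] bb by (simp add: algebra_simps)
    also have "\<dots> = Mop (vv (i - 1 - 1))" using step2(2) vv_down[of "i-1"] by simp
    finally show ?case using step2(2) by simp
  qed
  then show ?thesis by simp
qed

lemma nu_gt1: "nu > 1"
proof -
  have "c (-1) < c (int n - 1)" using mono_int_less[of c, OF c_inc] n_pos by simp
  then show ?thesis using c_m1 nu_def by simp
qed

lemma mu_abs: "\<bar>mu\<bar> < 1"
proof -
  have "(\<lambda>k. - \<bar>d k\<bar>) (-1) < (\<lambda>k. - \<bar>d k\<bar>) (int n - 1)"
    using mono_int_less[of "\<lambda>k. - \<bar>d k\<bar>", OF _] d_dec n_pos by simp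
  then show ?thesis using d_m1 mu_def by simp
qed

lemma mu_nz: "mu \<noteq> 0"
  using d_sign[of "int n - 1"] mu_def by (auto split: if_splits)

lemma p0_int: "is_int_point p0" and r0_int: "is_int_point r0"
  using vv_int p0_def r0_def by auto

lemma det_p0r0: "det2 p0 r0 = 1 \<or> det2 p0 r0 = -1"
  using det_v[of "int n - 1"] unfolding p0_def r0_def by (simp del: det2_simps split: if_splits)

lemma char_nu: "nu^2 - (p0$1 + r0$2) * nu + det2 p0 r0 = 0"
proof -
  have "psi (vec2 1 a1) = 0" using a1_gt by (simp add: psi_def)
  then have e: "Mop (vec2 1 a1) = nu *\<^sub>R vec2 1 a1" by (rule eig_psi0)
  have e1: "nu - p0$1 = a1 * r0$1" using arg_cong[OF e, of "\<lambda>v. v$1"] by (simp add: Mop_def)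
  have e2: "p0$2 = a1 * (nu - r0$2)" using arg_cong[OF e, of "\<lambda>v. v$2"] by (simp add: Mop_def algebra_simps)
  have "nu^2 - (p0$1 + r0$2) * nu + det2 p0 r0 = (nu - p0$1) * (nu - r0$2) - p0$2 * r0$1"
    by (simp add: algebra_simps power2_eq_square)
  also have "\<dots> = 0" unfolding e1 e2 by (simp add: algebra_simps)
  finally show ?thesis .
qed

lemma char_mu: "mu^2 - (p0$1 + r0$2) * mu + det2 p0 r0 = 0"
proof -
  have "phi (vec2 (-bm) 1) = 0" by (simp add: phi_def)
  then have e: "Mop (vec2 (-bm) 1) = mu *\<^sub>R vec2 (-bm) 1" by (rule eig_phi0)
  have e1: "r0$1 = bm * (p0$1 - mu)" using arg_cong[OF e, of "\<lambda>v. v$1"] by (simp add: Mop_def algebra_simps)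
  have e2: "mu - r0$2 = - bm * p0$2" using arg_cong[OF e, of "\<lambda>v. v$2"] by (simp add: Mop_def algebra_simps)
  have "mu^2 - (p0$1 + r0$2) * mu + det2 p0 r0 = (mu - p0$1) * (mu - r0$2) - p0$2 * r0$1"
    by (simp add: algebra_simps power2_eq_square)
  also have "\<dots> = 0" unfolding e1 e2 by (simp add: algebra_simps)
  finally show ?thesis .
qed

lemma trD_int: "\<exists>T D. p0$1 + r0$2 = of_int T \<and> det2 p0 r0 = of_int D \<and> (D = 1 \<or> D = -1)"
proof -
  have "p0$1 + r0$2 \<in> \<int>" using p0_int r0_int unfolding is_int_point_def by simp
  then obtain T where "p0$1 + r0$2 = of_int T" by (auto elim: Ints_cases)
  moreover have "det2 p0 r0 = of_int 1 \<or> det2 p0 r0 = of_int (-1)" using det_p0r0 by simp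
  ultimately show ?thesis by blast
qed

lemma nu_irr: "nu \<notin> \<rat>"
proof
  assume q: "nu \<in> \<rat>"
  obtain T D where TD: "p0$1 + r0$2 = of_int T" "det2 p0 r0 = of_int D" "D = 1 \<or> D = -1" using trD_int by blast
  have ch: "nu^2 - of_int T * nu + of_int D = 0" using char_nu TD by simp
  have zi: "nu \<in> \<int>" using rat_root_int[OF q ch] .
  have tz: "of_int T - nu \<in> \<int>" using zi by simp
  have pr: "nu * (of_int T - nu) = of_int D" using ch by (simp add: algebra_simps power2_eq_square)
  show False
  proof (cases "of_int T - nu = 0")
    case True then show False using pr TD(3) by auto
  next
    case False
    have "\<bar>of_int T - nu\<bar> \<ge> 1" using Ints_ge1[of "\<bar>of_int T - nu\<bar>"] tz False by simp
    then have "nu * 1 \<le> nu * \<bar>of_int T - nu\<bar>" using nu_gt1 by (intro mult_left_mono) auto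
    then have "1 < nu * \<bar>of_int T - nu\<bar>" using nu_gt1 by linarith
    then have "\<bar>nu * (of_int T - nu)\<bar> > 1" using nu_gt1 by (simp add: abs_mult)
    then show False using pr TD(3) by auto
  qed
qed

lemma mu_irr: "mu \<notin> \<rat>"
proof
  assume q: "mu \<in> \<rat>"
  obtain T D where TD: "p0$1 + r0$2 = of_int T" "det2 p0 r0 = of_int D" "D = 1 \<or> D = -1" using trD_int by blast
  have ch: "mu^2 - of_int T * mu + of_int D = 0" using char_mu TD by simp
  have zi: "mu \<in> \<int>" using rat_root_int[OF q ch] .
  then show False using Ints_abs_lt1 mu_abs mu_nz by blast
qed

lemma Mop_int: "is_int_point q \<Longrightarrow> is_int_point (Mop q)"
  using p0_int r0_int by (auto simp: is_int_point_def Mop_def)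

lemma eig_rat: "is_int_point q \<Longrightarrow> q \<noteq> 0 \<Longrightarrow> Mop q = l *\<^sub>R q \<Longrightarrow> l \<in> \<rat>"
proof -
  assume a: "is_int_point q" "q \<noteq> 0" "Mop q = l *\<^sub>R q"
  have mi: "is_int_point (Mop q)" using Mop_int a(1) .
  show ?thesis
  proof (cases "q$1 = 0")
    case False
    have "l = (Mop q)$1 / q$1" using a(3) False by simp
    moreover have "(Mop q)$1 \<in> \<rat>" "q$1 \<in> \<rat>" using mi a(1) Ints_subset_Rats by (auto simp: is_int_point_def)
    ultimately show ?thesis by simp
  next
    case True
    then have F: "q$2 \<noteq> 0" using a(2) by (auto simp: vec2_eq_iff)
    have "l = (Mop q)$2 / q$2" using a(3) F by simp
    moreover have "(Mop q)$2 \<in> \<rat>" "q$2 \<in> \<rat>" using mi a(1) Ints_subset_Rats by (auto simp: is_int_point_def)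
    ultimately show ?thesis by simp
  qed
qed

lemma lattice_psi_nz: "is_int_point q \<Longrightarrow> q \<noteq> 0 \<Longrightarrow> psi q \<noteq> 0"
  using eig_psi0 eig_rat nu_irr by blast

lemma lattice_phi_nz: "is_int_point q \<Longrightarrow> q \<noteq> 0 \<Longrightarrow> phi q \<noteq> 0"
  using eig_phi0 eig_rat mu_irr by blast

end

lemma cr_aux:
  fixes pa pb qa qb za zb :: real
  assumes D: "pa*qb - pb*qa \<noteq> 0"
  shows "za = ((za*qb - zb*qa)/(pa*qb - pb*qa))*pa + ((pa*zb - pb*za)/(pa*qb-pb*qa))*qa"
    and "zb = ((za*qb - zb*qa)/(pa*qb - pb*qa))*pb + ((pa*zb - pb*za)/(pa*qb-pb*qa))*qb"
proof -
  have e1: "(za*qb - zb*qa)*pa + (pa*zb - pb*za)*qa = za * (pa*qb - pb*qa)" by algebra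
  have e2: "(za*qb - zb*qa)*pb + (pa*zb - pb*za)*qb = zb * (pa*qb - pb*qa)" by algebra
  have "((za*qb - zb*qa)/(pa*qb - pb*qa))*pa + ((pa*zb - pb*za)/(pa*qb-pb*qa))*qa
      = ((za*qb - zb*qa)*pa + (pa*zb - pb*za)*qa) / (pa*qb - pb*qa)" by (simp add: add_divide_distrib)
  also have "\<dots> = za" unfolding e1 using D by simp
  finally show "za = ((za*qb - zb*qa)/(pa*qb - pb*qa))*pa + ((pa*zb - pb*za)/(pa*qb-pb*qa))*qa" by simp
  have "((za*qb - zb*qa)/(pa*qb - pb*qa))*pb + ((pa*zb - pb*za)/(pa*qb-pb*qa))*qb
      = ((za*qb - zb*qa)*pb + (pa*zb - pb*za)*qb) / (pa*qb - pb*qa)" by (simp add: add_divide_distrib)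
  also have "\<dots> = zb" unfolding e2 using D by simp
  finally show "zb = ((za*qb - zb*qa)/(pa*qb - pb*qa))*pb + ((pa*zb - pb*za)/(pa*qb-pb*qa))*qb" by simp
qed

lemma cramer: "det2 a b \<noteq> 0 \<Longrightarrow> z = (det2 z b / det2 a b) *\<^sub>R a + (det2 a z / det2 a b) *\<^sub>R b"
  using cr_aux[where pa="a$1" and pb="a$2" and qa="b$1" and qb="b$2" and za="z$1" and zb="z$2"] by (simp add: vec2_eq_iff)

lemma det_int: "is_int_point p \<Longrightarrow> is_int_point q \<Longrightarrow> det2 p q \<in> \<int>"
  by (auto simp: is_int_point_def)

context bseq begin

definition inK :: "real^2 \<Rightarrow> bool" where "inK q \<longleftrightarrow> phi q \<ge> 0 \<and> psi q \<le> 0"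
definition "Sset = {q. inK q \<and> is_int_point q \<and> q \<noteq> 0}"
definition "sdet = bm + 1/a1"

lemma sdet_pos: "sdet > 0" using bm_gt a1_gt by (simp add: sdet_def add_pos_pos)

lemma det_pp0: "phi x * psi y - psi x * phi y = - sdet * det2 x y"
proof -
  have "a1 \<noteq> 0" using a1_gt by simp
  then show ?thesis by (simp add: phi_def psi_def sdet_def field_simps)
qed

lemma det_pp: "det2 x y = - (phi x * psi y - psi x * phi y) / sdet"
  unfolding det_pp0 using sdet_pos by (simp del: det2_simps)

lemma S_strict: "q \<in> Sset \<Longrightarrow> phi q > 0 \<and> psi q < 0"
  using lattice_phi_nz lattice_psi_nz by (force simp: Sset_def inK_def)

lemma f_pos: "odd k \<Longrightarrow> q \<in> Sset \<Longrightarrow> det2 (vv k) q \<ge> 1"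
proof -
  assume k: "odd k" and q: "q \<in> Sset"
  have dk: "d k > 0" using d_sign[of k] k by simp
  have ck: "c k > 0" by (rule c_pos)
  have pq: "phi q > 0" "psi q < 0" using S_strict[OF q] by auto
  have "c k * psi q < 0" using ck pq by (simp add: mult_pos_neg)
  moreover have "d k * phi q > 0" using dk pq by simp
  ultimately have "c k * (- psi q) + d k * phi q > 0" by simp
  then have "det2 (vv k) q > 0" unfolding det_pp c_def[symmetric] d_def[symmetric] using sdet_pos
    by (simp add: algebra_simps)
  moreover have "det2 (vv k) q \<in> \<int>" using det_int vv_int q by (auto simp: Sset_def)
  ultimately show ?thesis using Ints_ge1 by blast
qed

lemma vv_even_S: "vv (2*j) \<in> Sset"
proof -
  have "phi (vv (2*j)) > 0" using c_pos c_def by simp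
  moreover have "psi (vv (2*j)) < 0" using d_sign[of "2*j"] d_def by simp
  ultimately show ?thesis using vv_int by (auto simp: Sset_def inK_def)
qed

lemma c_ge: "c (int m) \<ge> real m"
proof (induction m)
  case 0 then show ?case using c_pos[of 0] by simp
next
  case (Suc m)
  have "c (int m + 1) = c (int m - 1) + real (b (int m + 1)) * c (int m)" by (rule c_rec)
  moreover have "c (int m - 1) \<ge> 1" using mono_int_le[of c, OF c_inc, of "-1" "int m - 1"] c_m1 by simp
  moreover have "real (b (int m + 1)) * c (int m) \<ge> c (int m)" using bpos c_pos[of "int m"]
    by (simp add: mult_le_cancel_right1)
  ultimately have "c (int m + 1) \<ge> 1 + real m" using Suc by linarith
  moreover have "int (Suc m) = int m + 1" "real (Suc m) = 1 + real m" by simp_all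
  ultimately show ?case by (simp only:)
qed

lemma c_le1: "k \<le> -1 \<Longrightarrow> c k \<le> 1"
  using mono_int_le[of c, OF c_inc, of k "-1"] c_m1 by simp

lemma d_le1: "k \<ge> -1 \<Longrightarrow> \<bar>d k\<bar> \<le> 1"
  using mono_int_le[of "\<lambda>k. - \<bar>d k\<bar>", OF _, of "-1" k] d_dec d_m1 by simp

lemma d_ge: "\<bar>d (-2 - int m)\<bar> \<ge> real m"
proof (induction m)
  case 0 then show ?case by simp
next
  case (Suc m)
  have r: "\<bar>d (-2 - int m - 1)\<bar> = \<bar>d (-2 - int m + 1)\<bar> + real (b (-2 - int m + 1)) * \<bar>d (-2 - int m)\<bar>"
    by (rule d_abs_rec)
  have a: "\<bar>d (-2 - int m + 1)\<bar> \<ge> 1" using mono_int_le[of "\<lambda>k. - \<bar>d k\<bar>", OF _, of "-2 - int m + 1" "-1"] d_dec d_m1 by simp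
  have "real (b (-2 - int m + 1)) * \<bar>d (-2 - int m)\<bar> \<ge> \<bar>d (-2 - int m)\<bar>" using bpos
    by (simp add: mult_le_cancel_right1)
  then have "\<bar>d (-2 - int m - 1)\<bar> \<ge> 1 + real m" using r a Suc by linarith
  moreover have "-2 - int m - 1 = -2 - int (Suc m)" by simp
  ultimately show ?case by simp
qed

lemma cover: "q \<in> Sset \<Longrightarrow> \<exists>j. det2 (vv (2*j)) q \<le> 0 \<and> det2 (vv (2*j+2)) q > 0"
proof -
  assume q: "q \<in> Sset"
  define X where "X = phi q"
  define Y where "Y = - psi q"
  have XY: "X > 0" "Y > 0" using S_strict[OF q] X_def Y_def by auto
  define D where "D j = det2 (vv (2*j)) q" for j
  have Dform: "D j = (c (2*j) * Y + d (2*j) * X) / sdet" for j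
    unfolding D_def det_pp c_def X_def Y_def d_def by (simp add: algebra_simps)
  obtain m where m: "X / Y < real m" using reals_Archimedean2 by blast
  obtain m' where m': "Y / X < real m'" using reals_Archimedean2 by blast
  have "D (int m) > 0"
  proof -
    have c1: "c (2 * int m) \<ge> real m" using c_ge[of "2*m"] by simp
    have "X / Y < c (2 * int m)" using c1 m by linarith
    then have "c (2 * int m) * Y > X" using XY by (simp add: divide_less_eq)
    moreover have "d (2 * int m) \<ge> -1" using d_le1[of "2 * int m"] by simp
    then have "(-1) * X \<le> d (2 * int m) * X" using XY by (intro mult_right_mono) auto
    then have "d (2 * int m) * X \<ge> - X" by simp
    ultimately show ?thesis unfolding Dform using sdet_pos by simp
  qed
  moreover have "D (-1 - int m') \<le> 0"
  proof -
    have e: "2 * (-1 - int m') = -2 - int (2*m')" by simp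
    have d1: "\<bar>d (-2 - int (2*m'))\<bar> \<ge> real m'" using d_ge[of "2*m'"] by simp
    have ds: "d (-2 - int (2*m')) < 0" using d_sign[of "-2 - int (2*m')"] by simp
    have "d (-2 - int (2*m')) * X < - Y"
    proof -
      have "- d (-2 - int (2*m')) > Y / X" using d1 ds m' by simp
      then have "- d (-2 - int (2*m')) * X > Y" using XY by (simp add: divide_less_eq)
      then show ?thesis by simp
    qed
    moreover have "c (-2 - int (2*m')) * Y \<le> Y" using c_le1[of "-2 - int (2*m')"] XY by simp
    ultimately show ?thesis unfolding Dform e using sdet_pos by (simp add: divide_nonpos_pos)
  qed
  moreover have "-1 - int m' < int m" by simp
  ultimately obtain k where "D k \<le> 0" "D (k+1) > 0" using discrete_ivt[of D] by blast
  then show ?thesis unfolding D_def by (auto simp: algebra_simps)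
qed

lemma inK_comb: "0 \<le> x \<Longrightarrow> 0 \<le> y \<Longrightarrow> y \<le> real (b (2*j+2)) * x \<Longrightarrow> inK (x *\<^sub>R vv (2*j) + y *\<^sub>R vv (2*j+1))"
proof -
  assume a: "0 \<le> x" "0 \<le> y" "y \<le> real (b (2*j+2)) * x"
  have "phi (x *\<^sub>R vv (2*j) + y *\<^sub>R vv (2*j+1)) = x * c (2*j) + y * c (2*j+1)" by (simp add: c_def)
  moreover have "\<dots> \<ge> 0" using a c_pos[of "2*j"] c_pos[of "2*j+1"] by (intro add_nonneg_nonneg mult_nonneg_nonneg) auto
  moreover have dp: "d (2*j+1) > 0" "d (2*j) < 0" using d_sign[of "2*j+1"] d_sign[of "2*j"] by auto
  have dr: "d (2*j+2) = d (2*j) + real (b (2*j+2)) * d (2*j+1)" using d_rec[of "2*j+1"] by (simp add: add.assoc)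
  have d2: "d (2*j+2) < 0" using d_sign[of "2*j+2"] by simp
  have "psi (x *\<^sub>R vv (2*j) + y *\<^sub>R vv (2*j+1)) = x * d (2*j) + y * d (2*j+1)" by (simp add: d_def)
  moreover have "y * d (2*j+1) \<le> real (b (2*j+2)) * x * d (2*j+1)" using a dp by (simp add: mult_right_mono)
  moreover have "x * d (2*j) + real (b (2*j+2)) * x * d (2*j+1) = x * d (2*j+2)" unfolding dr by (simp add: algebra_simps)
  moreover have "x * d (2*j+2) \<le> 0" using a d2 by (simp add: mult_nonneg_nonpos)
  ultimately show ?thesis unfolding inK_def by linarith
qed

end

lemma indep0: "det2 a b \<noteq> 0 \<Longrightarrow> det2 a z = 0 \<Longrightarrow> det2 b z = 0 \<Longrightarrow> z = 0"
proof -
  assume a: "det2 a b \<noteq> 0" "det2 a z = 0" "det2 b z = 0"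
  have "det2 z b = 0" using a(3) by (simp add: algebra_simps)
  then show "z = 0" using cramer[OF a(1), of z] a(2) by simp
qed

context bseq begin

lemma vv_even_step: "vv (2*k+2) = vv (2*k) + real (b (2*k+2)) *\<^sub>R vv (2*k+1)"
  using vv(3)[of "2*k+1"] by (simp add: add.assoc)

lemma det_even: "det2 (vv (2*k)) (vv (2*k+1)) = -1"
  using det_v[of "2*k"] by (simp del: det2_simps)

lemma det_odd: "det2 (vv (2*k-1)) (vv (2*k)) = 1"
  using det_v[of "2*k-1"] by (simp del: det2_simps)

lemma det_A: "det2 (vv (2*k)) (vv (2*k+2)) = - real (b (2*k+2))"
proof -
  have "det2 (vv (2*k)) (vv (2*k+2)) = real (b (2*k+2)) * det2 (vv (2*k)) (vv (2*k+1))"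
    unfolding vv_even_step by (simp add: algebra_simps)
  then show ?thesis using det_even by (simp del: det2_simps)
qed

lemma det2_add_left: "det2 (u + t *\<^sub>R w) z = det2 u z + t * det2 w z"
  by (simp add: algebra_simps)

lemma comb_aux: "(1 - t) *\<^sub>R u + t *\<^sub>R (u + r *\<^sub>R w) = u + (t * r) *\<^sub>R (w::real^2)"
  by (simp add: vec2_eq_iff algebra_simps)

lemma det2_swap: "det2 x y = - det2 y x" by (simp add: mult.commute)

lemma E1: "vv (2*k) extreme_point_of (convex hull Sset)"
proof -
  define v where "v = vv (2*k)"
  define g where "g x = det2 (vv (2*k-1)) x + det2 (vv (2*k+1)) x" for x
  have glin: "g (s *\<^sub>R x + t *\<^sub>R y) = s * g x + t * g y" for s t x y
    unfolding g_def by (simp add: algebra_simps)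
  have b2: "det2 (vv (2*k+1)) (vv (2*k)) = 1" unfolding det2_swap[of "vv (2*k+1)" "vv (2*k)"] det_even[of k] by simp
  have gv: "g v = 2" unfolding g_def v_def using det_odd[of k] b2 by (simp del: det2_simps)
  have ge: "q \<in> Sset \<Longrightarrow> g q \<ge> 2 \<and> (g q = 2 \<longrightarrow> q = v)" for q
  proof -
    assume q: "q \<in> Sset"
    have o1: "odd (2*k-1)" "odd (2*k+1)" by simp_all
    have f1: "det2 (vv (2*k-1)) q \<ge> 1" using f_pos[OF o1(1) q] .
    have f2: "det2 (vv (2*k+1)) q \<ge> 1" using f_pos[OF o1(2) q] .
    have "g q = 2 \<longrightarrow> q = v"
    proof
      assume "g q = 2"
      then have e1: "det2 (vv (2*k-1)) q = 1" and e2: "det2 (vv (2*k+1)) q = 1"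
        using f1 f2 unfolding g_def by linarith+
      have d1: "det2 (vv (2*k-1)) (q - v) = 0" using e1 det_odd[of k] unfolding v_def
        by (simp add: algebra_simps)
      have d2: "det2 (vv (2*k+1)) (q - v) = 0" using e2 det_even[of k] unfolding v_def
        by (simp add: algebra_simps)
      have vs: "vv (2*k+1) = vv (2*k-1) + real (b (2*k+1)) *\<^sub>R vv (2*k)" using vv(3)[of "2*k"] by simp
      have "det2 (vv (2*k-1)) (vv (2*k+1)) = real (b (2*k+1)) * det2 (vv (2*k-1)) (vv (2*k))"
        unfolding vs by (simp add: algebra_simps)
      also have "\<dots> = real (b (2*k+1))" using det_odd[of k] by (simp del: det2_simps)
      moreover have "b (2*k+1) \<ge> 1" using bpos by blast
      ultimately have "det2 (vv (2*k-1)) (vv (2*k+1)) \<noteq> 0" by (simp del: det2_simps)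
      then have "q - v = 0" using indep0 d1 d2 by blast
      then show "q = v" by simp
    qed
    then show ?thesis using f1 f2 unfolding g_def by simp
  qed
  define T where "T = {x. g x > 2} \<union> {v}"
  have Tc: "convex T"
  proof (rule convexI)
    fix x y :: "real^2" and s t :: real
    assume x: "x \<in> T" and y: "y \<in> T" and st: "0 \<le> s" "0 \<le> t" "s + t = 1"
    have xg0: "2 < g x \<or> x = v" using x unfolding T_def by blast
    have xg: "g x \<ge> 2" "g x = 2 \<longrightarrow> x = v" using xg0 gv by auto
    have yg0: "2 < g y \<or> y = v" using y unfolding T_def by blast
    have yg: "g y \<ge> 2" "g y = 2 \<longrightarrow> y = v" using yg0 gv by auto
    show "s *\<^sub>R x + t *\<^sub>R y \<in> T"
    proof (cases "g (s *\<^sub>R x + t *\<^sub>R y) > 2")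
      case True then show ?thesis by (simp add: T_def)
    next
      case False
      then have le: "s * g x + t * g y \<le> 2" unfolding glin by simp
      have "s * (g x - 2) \<ge> 0" "t * (g y - 2) \<ge> 0" using st xg(1) yg(1) by simp_all
      moreover have "s * (g x - 2) + t * (g y - 2) \<le> 0" using le st by (simp add: algebra_simps)
      ultimately have z: "s * (g x - 2) = 0" "t * (g y - 2) = 0" by linarith+
      have "s = 0 \<or> g x = 2" using z(1) by simp
      then have "s = 0 \<or> x = v" using xg(2) by blast
      moreover have "t = 0 \<or> g y = 2" using z(2) by simp
      then have "t = 0 \<or> y = v" using yg(2) by blast
      ultimately have "s *\<^sub>R x + t *\<^sub>R y = v"
      proof (elim disjE)
        assume "s = 0" "t = 0" then show ?thesis using st by simp
      next
        assume "s = 0" "y = v" then show ?thesis using st by simp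
      next
        assume "x = v" "t = 0" then show ?thesis using st by simp
      next
        assume "x = v" "y = v"
        then have "s *\<^sub>R x + t *\<^sub>R y = (s + t) *\<^sub>R v" by (simp add: scaleR_left_distrib)
        then show ?thesis using st by simp
      qed
      then show ?thesis by (simp add: T_def)
    qed
  qed
  have ST: "Sset \<subseteq> T"
  proof
    fix q assume q: "q \<in> Sset"
    have h1: "g q \<ge> 2" and h2: "g q = 2 \<longrightarrow> q = v" using ge[OF q] by blast+
    show "q \<in> T"
    proof (cases "g q = 2")
      case True then have "q = v" using h2 by blast
      then show ?thesis by (simp add: T_def)
    next
      case False then have "g q > 2" using h1 by linarith
      then show ?thesis by (simp add: T_def)
    qed
  qed
  have HT: "convex hull Sset \<subseteq> T" using hull_minimal[of Sset T convex] ST Tc by blast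
  have vS: "v \<in> convex hull Sset" unfolding v_def using vv_even_S[of k] hull_subset[of Sset convex] by blast
  have "\<forall>a \<in> convex hull Sset. \<forall>c \<in> convex hull Sset. v \<notin> open_segment a c"
  proof (intro ballI notI)
    fix a c assume a: "a \<in> convex hull Sset" and c: "c \<in> convex hull Sset" and vs: "v \<in> open_segment a c"
    obtain u where u: "0 < u" "u < 1" "v = (1 - u) *\<^sub>R a + u *\<^sub>R c" and ac: "a \<noteq> c"
      using vs unfolding in_segment by blast
    have aT: "a \<in> T" and cT: "c \<in> T" using a c HT by auto
    have ag0: "2 < g a \<or> a = v" using aT unfolding T_def by blast
    have ag: "g a \<ge> 2" "g a = 2 \<longrightarrow> a = v" using ag0 gv by auto
    have cg0: "2 < g c \<or> c = v" using cT unfolding T_def by blast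
    have cg: "g c \<ge> 2" "g c = 2 \<longrightarrow> c = v" using cg0 gv by auto
    have "2 = (1 - u) * g a + u * g c" using gv u(3) glin by simp
    then have "(1 - u) * (g a - 2) + u * (g c - 2) = 0" by (simp add: algebra_simps)
    moreover have "(1 - u) * (g a - 2) \<ge> 0" "u * (g c - 2) \<ge> 0" using u ag cg by simp_all
    ultimately have "(1 - u) * (g a - 2) = 0" "u * (g c - 2) = 0" by linarith+
    then have "g a = 2" "g c = 2" using u by simp_all
    then have "a = v" "c = v" using ag(2) cg(2) by blast+
    then show False using ac by simp
  qed
  then show ?thesis using vS unfolding extreme_point_of_def v_def by blast
qed

lemma Sset_add: "p \<in> Sset \<Longrightarrow> q \<in> Sset \<Longrightarrow> p + q \<in> Sset"
proof -
  assume p: "p \<in> Sset" and q: "q \<in> Sset"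
  have ph: "phi (p + q) > 0" using S_strict[OF p] S_strict[OF q] by simp
  then have "p + q \<noteq> 0" by (metis phi_lin(5) less_irrefl)
  moreover note ph
  moreover have "psi (p + q) \<le> 0" using S_strict[OF p] S_strict[OF q] by simp
  moreover have "is_int_point (p + q)" using p q by (auto simp: Sset_def is_int_point_def)
  ultimately show ?thesis by (auto simp: Sset_def inK_def)
qed

lemma not_ext_mid: "p \<in> Sset \<Longrightarrow> p - vv (2*i) \<in> Sset \<Longrightarrow> \<not> p extreme_point_of (convex hull Sset)"
proof
  assume p: "p \<in> Sset" and pw: "p - vv (2*i) \<in> Sset" and ex: "p extreme_point_of (convex hull Sset)"
  have e: "p + vv (2*i) \<in> Sset" using Sset_add[OF p vv_even_S] .
  have ne: "p - vv (2*i) \<noteq> p + vv (2*i)"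
  proof
    assume h: "p - vv (2*i) = p + vv (2*i)"
    have "phi (p - vv (2*i)) = phi (p + vv (2*i))" by (simp only: h)
    then have "c (2*i) = 0" unfolding phi_lin c_def by simp
    then show False using c_pos[of "2*i"] by simp
  qed
  have eqp: "p = (1 - 1/2) *\<^sub>R (p - vv (2*i)) + (1/2) *\<^sub>R (p + vv (2*i))"
    by (simp add: vec2_eq_iff algebra_simps)
  have "p \<in> open_segment (p - vv (2*i)) (p + vv (2*i))"
    unfolding in_segment using ne eqp by (intro conjI exI[of _ "1/2"]) auto
  then show False using ex pw e hull_subset[of Sset convex] unfolding extreme_point_of_def by blast
qed

lemma E2: "p extreme_point_of (convex hull Sset) \<Longrightarrow> \<exists>k. p = vv (2*k)"
proof -
  assume ex: "p extreme_point_of (convex hull Sset)"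
  have pS: "p \<in> Sset" using extreme_point_of_convex_hull[OF ex] .
  obtain j where j: "det2 (vv (2*j)) p \<le> 0" "det2 (vv (2*j+2)) p > 0" using cover[OF pS] by blast
  define x where "x = det2 (vv (2*j+1)) p"
  define y where "y = - det2 (vv (2*j)) p"
  define B where "B = real (b (2*j+2))"
  have B1: "B \<ge> 1" using bpos B_def by simp
  have pint: "is_int_point p" using pS by (simp add: Sset_def)
  have x1: "x \<ge> 1" unfolding x_def by (rule f_pos) (use pS in simp_all)
  have "det2 (vv (2*j)) p \<in> \<int>" using det_int vv_int pint by blast
  then have yi: "y \<in> \<int>" unfolding y_def by (rule Ints_minus)
  have xi: "x \<in> \<int>" unfolding x_def using det_int vv_int pint by blast
  have y0: "y \<ge> 0" using j(1) y_def by simp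
  have rep: "p = x *\<^sub>R vv (2*j) + y *\<^sub>R vv (2*j+1)"
  proof -
    have "det2 (vv (2*j)) (vv (2*j+1)) \<noteq> 0" using det_even[of j] by (simp del: det2_simps)
    moreover have "det2 p (vv (2*j+1)) = - det2 (vv (2*j+1)) p" by simp
    ultimately show ?thesis using cramer[of "vv (2*j)" "vv (2*j+1)" p] unfolding x_def y_def using det_even[of j]
      by (simp del: det2_simps)
  qed
  have yB: "y < B * x"
  proof -
    have "det2 (vv (2*j+2)) p = B * x - y" unfolding vv_even_step x_def y_def B_def det2_add_left
      by (simp del: det2_simps)
    then show ?thesis using j(2) by simp
  qed
  have phi_comb: "phi (s *\<^sub>R vv (2*j) + t *\<^sub>R vv (2*j+1)) > 0" if "s \<ge> 1" "t \<ge> 0" for s t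
  proof -
    have "phi (s *\<^sub>R vv (2*j) + t *\<^sub>R vv (2*j+1)) = s * c (2*j) + t * c (2*j+1)" by (simp add: c_def)
    moreover have "s * c (2*j) > 0" using that c_pos[of "2*j"] by simp
    moreover have "t * c (2*j+1) \<ge> 0" using that c_pos[of "2*j+1"] by simp
    ultimately show ?thesis by linarith
  qed
  show ?thesis
  proof (cases "x = 1")
    case True
    show ?thesis
    proof (cases "y = 0")
      case True
      then have "p = vv (2*j)" using rep \<open>x = 1\<close> by simp
      then show ?thesis by blast
    next
      case False
      then have ypos: "y > 0" using y0 by simp
      have yB1: "y < B" using yB \<open>x = 1\<close> by simp
      define t where "t = y / B"
      have t: "0 < t" "t < 1" using ypos yB1 B1 by (simp_all add: t_def)
      have tB: "t * B = y" using B1 by (simp add: t_def)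
      have "p = (1 - t) *\<^sub>R vv (2*j) + t *\<^sub>R vv (2*j+2)"
        unfolding vv_even_step B_def[symmetric] comb_aux tB using rep \<open>x = 1\<close> by simp
      moreover have "vv (2*j) \<noteq> vv (2*j+2)"
      proof
        assume "vv (2*j) = vv (2*j+2)"
        then have "c (2*j) = c (2*j+2)" by (simp add: c_def)
        then show False using mono_int_less[of c, OF c_inc, of "2*j" "2*j+2"] by simp
      qed
      ultimately have "p \<in> open_segment (vv (2*j)) (vv (2*j+2))" using t unfolding in_segment by blast
      moreover have "vv (2*j) \<in> convex hull Sset" using vv_even_S[of j] hull_subset[of Sset convex] by blast
      moreover have "vv (2*j+2) \<in> convex hull Sset"
      proof -
        have "2*(j+1) = 2*j+2" by simp
        then show ?thesis using vv_even_S[of "j+1"] hull_subset[of Sset convex] by auto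
      qed
      ultimately show ?thesis using ex unfolding extreme_point_of_def by blast
    qed
  next
    case False
    then have x2: "x - 1 \<ge> 1" using x1 xi Ints_ge1[of "x - 1"] by simp
    show ?thesis
    proof (cases "y \<le> B * (x - 1)")
      case True
      have eq: "p - vv (2*j) = (x - 1) *\<^sub>R vv (2*j) + y *\<^sub>R vv (2*j+1)" unfolding rep by (simp add: algebra_simps)
      have "p - vv (2*j) \<in> Sset"
      proof -
        have "inK (p - vv (2*j))" unfolding eq using inK_comb[of "x-1" y j] True y0 x2 B_def by simp
        moreover have "is_int_point (p - vv (2*j))" using pint vv_int[of "2*j"] by (auto simp: is_int_point_def)
        moreover have "p - vv (2*j) \<noteq> 0"
        proof -
          have "phi (p - vv (2*j)) > 0" unfolding eq using phi_comb[of "x-1" y] x2 y0 by blast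
          then show ?thesis by (metis phi_lin(5) less_irrefl)
        qed
        ultimately show ?thesis by (simp add: Sset_def)
      qed
      then show ?thesis using not_ext_mid[OF pS] ex by blast
    next
      case False
      have eq: "p - vv (2*(j+1)) = (x - 1) *\<^sub>R vv (2*j) + (y - B) *\<^sub>R vv (2*j+1)"
      proof -
        have "2*(j+1) = 2*j+2" by simp
        then have e: "vv (2*(j+1)) = vv (2*j) + B *\<^sub>R vv (2*j+1)" using vv_even_step[of j] B_def by simp
        show ?thesis unfolding e by (subst rep) (simp add: vec2_eq_iff algebra_simps)
      qed
      have "B * 1 \<le> B * (x - 1)" using x2 B1 by (intro mult_left_mono) auto
      then have yB2: "y - B \<ge> 0" using False by linarith
      have yB3: "y - B \<le> B * (x - 1)" using yB by (simp add: algebra_simps)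
      have "p - vv (2*(j+1)) \<in> Sset"
      proof -
        have "inK (p - vv (2*(j+1)))" unfolding eq using inK_comb[of "x-1" "y - B" j] yB2 yB3 x2 B_def by simp
        moreover have "is_int_point (p - vv (2*(j+1)))" using pint vv_int[of "2*(j+1)"] by (auto simp: is_int_point_def)
        moreover have "p - vv (2*(j+1)) \<noteq> 0"
        proof -
          have "phi (p - vv (2*(j+1))) > 0" unfolding eq using phi_comb[of "x-1" "y - B"] x2 yB2 by blast
          then show ?thesis by (metis phi_lin(5) less_irrefl)
        qed
        ultimately show ?thesis by (simp add: Sset_def)
      qed
      then show ?thesis using not_ext_mid[OF pS] ex by blast
    qed
  qed
qed

end

context bseq begin

definition "u_ang = vec2 (-bm) 1"
definition "w_ang = vec2 1 a1"

lemma det2_add_right: "det2 z (u + t *\<^sub>R w) = det2 z u + t * det2 z w"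
  by (simp add: algebra_simps)

lemma det2_scale: "det2 (s *\<^sub>R x) (t *\<^sub>R y) = s * t * det2 x y"
  by (simp add: algebra_simps)

lemma det2_self: "det2 z z = 0" by (simp add: mult.commute)

lemma angle_eq: "angle_set u_ang w_ang = {q. inK q}"
proof (intro set_eqI iffI)
  fix q assume "q \<in> angle_set u_ang w_ang"
  then obtain s t where st: "0 \<le> s" "0 \<le> t" "q = s *\<^sub>R u_ang + t *\<^sub>R w_ang" unfolding angle_set_def by blast
  have pu: "phi u_ang = 0" by (simp add: u_ang_def phi_def)
  have pw: "phi w_ang = 1 + bm * a1" by (simp add: w_ang_def phi_def)
  have qu: "psi u_ang = - sdet" using a1_gt by (simp add: u_ang_def psi_def sdet_def)
  have qw: "psi w_ang = 0" using a1_gt by (simp add: w_ang_def psi_def)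
  have "phi q = t * (1 + bm * a1)" using st pu pw by simp
  moreover have "1 + bm * a1 > 0" using bm_gt a1_gt by (simp add: add_pos_pos)
  moreover have "psi q = - s * sdet" using st qu qw by simp
  ultimately show "q \<in> {q. inK q}" using st sdet_pos by (simp add: inK_def)
next
  fix q assume "q \<in> {q. inK q}"
  then have K: "phi q \<ge> 0" "psi q \<le> 0" by (auto simp: inK_def)
  have P: "1 + bm * a1 > 0" using bm_gt a1_gt by (simp add: add_pos_pos)
  define t where "t = phi q / (1 + bm * a1)"
  define s where "s = - psi q / sdet"
  have pu: "phi u_ang = 0" by (simp add: u_ang_def phi_def)
  have pw: "phi w_ang = 1 + bm * a1" by (simp add: w_ang_def phi_def)
  have qu: "psi u_ang = - sdet" using a1_gt by (simp add: u_ang_def psi_def sdet_def)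
  have qw: "psi w_ang = 0" using a1_gt by (simp add: w_ang_def psi_def)
  have "phi (q - (s *\<^sub>R u_ang + t *\<^sub>R w_ang)) = 0" using pu pw P by (simp add: t_def)
  moreover have "psi (q - (s *\<^sub>R u_ang + t *\<^sub>R w_ang)) = 0" using qu qw sdet_pos by (simp add: s_def)
  ultimately have "q = s *\<^sub>R u_ang + t *\<^sub>R w_ang" using uniq by (metis eq_iff_diff_eq_0)
  moreover have "0 \<le> t" using K P by (simp add: t_def)
  moreover have "psi q / sdet \<le> 0" using K sdet_pos by (simp add: divide_nonpos_pos)
  then have "0 \<le> s" by (simp add: s_def)
  ultimately show "q \<in> angle_set u_ang w_ang" unfolding angle_set_def by blast
qed

lemma hull_eq: "sail_hull u_ang w_ang = convex hull Sset"
proof -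
  have "{p. p \<in> angle_set u_ang w_ang \<and> is_int_point p \<and> p \<noteq> 0} = Sset"
    unfolding angle_eq Sset_def by simp
  then show ?thesis unfolding sail_hull_def by simp
qed

lemma sv_eq: "sail_vertices u_ang w_ang = range (\<lambda>k. vv (2*k))"
  unfolding sail_vertices_def hull_eq using E1 E2 by blast

lemma A_inj: "inj (\<lambda>k. vv (2*k))"
proof (rule injI)
  fix k k' assume h: "vv (2*k) = vv (2*k')"
  show "k = k'"
  proof (rule ccontr)
    assume "k \<noteq> k'"
    then have "2*k < 2*k' \<or> 2*k' < 2*k" by linarith
    then have "c (2*k) \<noteq> c (2*k')" using mono_int_less[of c, OF c_inc] by fastforce
    then show False using h by (simp add: c_def)
  qed
qed

lemma detv2: "det2 (vv k) (vv (k+2)) = real (b (k+2)) * det2 (vv k) (vv (k+1))"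
proof -
  have "vv (k+2) = vv k + real (b (k+2)) *\<^sub>R vv (k+1)" using vv(3)[of "k+1"] by (simp add: add.assoc)
  then show ?thesis by (simp only: det2_add_right det2_self)
qed

lemma lls_A: "lls (\<lambda>k. vv (2*k)) j = real (b (j+2))"
proof (cases "even j")
  case True
  have e1: "2 * (j div 2) = j" "2 * (j div 2 + 1) = j + 2" using True by auto
  have "det2 (vv j) (vv (j+2)) = - real (b (j+2))" using detv2[of j] det_v[of j] True by (simp del: det2_simps)
  then show ?thesis unfolding lls_def using True e1 by (simp del: det2_simps)
next
  case False
  define K where "K = (j + 1) div 2"
  obtain h where h: "j = 2*h + 1" using False oddE by blast
  have "K = h + 1" unfolding K_def h by simp
  then have e: "2 * (K - 1) = j - 1" "2 * K = j + 1" "2 * (K + 1) = j + 3" using h by auto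
  have b1: "real (b (j+1)) > 0" "real (b (j+2)) > 0" "real (b (j+3)) > 0" using bpos by (auto intro: Suc_le_lessD)
  have m1: "vv (j-1) - vv (j+1) = - real (b (j+1)) *\<^sub>R vv j" using vv(3)[of j] by simp
  have m2': "vv (j+3) = vv (j+1) + real (b (j+3)) *\<^sub>R vv (j+2)"
  proof -
    have a: "j+2+1 = j+3" "j+2-1 = j+1" by simp_all
    show ?thesis using vv(3)[of "j+2"] unfolding a .
  qed
  have m2: "vv (j+3) - vv (j+1) = real (b (j+3)) *\<^sub>R vv (j+2)" using m2' by simp
  have dj: "det2 (vv j) (vv (j+2)) = real (b (j+2))" using detv2[of j] det_v[of j] False by (simp del: det2_simps)
  have num: "det2 (vv (j-1) - vv (j+1)) (vv (j+3) - vv (j+1)) = - (real (b (j+1)) * real (b (j+3)) * real (b (j+2)))"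
    unfolding m1 m2 det2_scale dj by (simp del: det2_simps)
  have den1: "det2 (vv (j-1)) (vv (j+1)) = - real (b (j+1))"
  proof -
    have a: "j - 1 + 2 = j + 1" "j - 1 + 1 = j" by simp_all
    have "even (j - 1)" using False by simp
    then show ?thesis using detv2[of "j-1"] det_v[of "j-1"] unfolding a by (simp del: det2_simps)
  qed
  have den2: "det2 (vv (j+1)) (vv (j+3)) = - real (b (j+3))"
  proof -
    have a: "j + 1 + 2 = j + 3" "j + 1 + 1 = j + 2" by simp_all
    have "even (j + 1)" using False by simp
    then show ?thesis using detv2[of "j+1"] det_v[of "j+1"] unfolding a by (simp del: det2_simps)
  qed
  have "lls (\<lambda>k. vv (2*k)) j = \<bar>det2 (vv (j-1) - vv (j+1)) (vv (j+3) - vv (j+1))\<bar> /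
          (\<bar>det2 (vv (j-1)) (vv (j+1))\<bar> * \<bar>det2 (vv (j+1)) (vv (j+3))\<bar>)"
    unfolding lls_def using False e by (simp add: Let_def K_def[symmetric] add.commute del: det2_simps)
  also have "\<dots> = real (b (j+2))" unfolding num den1 den2 using b1 by (simp add: abs_mult)
  finally show ?thesis .
qed

end

definition bs :: "nat list \<Rightarrow> int \<Rightarrow> nat" where
  "bs as k = as ! nat ((k - 1) mod int (length as))"

lemma bs_locale:
  assumes ne: "as \<noteq> []" and pos: "\<forall>a\<in>set as. 0 < a"
  shows "bseq (bs as) (length as)"
proof
  show "length as > 0" using ne by simp
  show "\<forall>k. bs as (k + int (length as)) = bs as k"
  proof
    fix k
    have "(k + int (length as) - 1) mod int (length as) = (k - 1) mod int (length as)"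
      by (metis add.commute add_diff_eq mod_add_self2)
    then show "bs as (k + int (length as)) = bs as k" by (simp add: bs_def)
  qed
  show "\<forall>k. bs as k \<ge> 1"
  proof
    fix k
    have "(k - 1) mod int (length as) < int (length as)" "0 \<le> (k - 1) mod int (length as)" using ne by simp_all
    then have "nat ((k - 1) mod int (length as)) < length as" by linarith
    then have "as ! nat ((k - 1) mod int (length as)) \<in> set as" by simp
    then show "bs as k \<ge> 1" using pos by (auto simp: bs_def Suc_le_eq)
  qed
qed

lemma bs_val: "i < length as \<Longrightarrow> bs as (int i + 1) = as ! i"
  by (simp add: bs_def)

locale lseq =
  fixes as :: "nat list"
  assumes ne: "as \<noteq> []" and pos: "\<forall>a\<in>set as. 0 < a"

sublocale lseq \<subseteq> bseq "bs as" "length as"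
  by (rule bs_locale[OF ne pos])

context lseq begin

lemma prefix: "m \<le> length as \<Longrightarrow>
  foldr (\<lambda>a B. lls_E a ** B) (take m as) (mat 1) *v vec2 1 0 = vv (int m - 1) \<and>
  foldr (\<lambda>a B. lls_E a ** B) (take m as) (mat 1) *v vec2 0 1 = vv (int m)"
proof (induction m)
  case 0 then show ?case using vv by simp
next
  case (Suc m)
  then have m: "m < length as" by simp
  define X where "X = foldr (\<lambda>a B. lls_E a ** B) (take m as) (mat 1)"
  have IH: "X *v vec2 1 0 = vv (int m - 1)" "X *v vec2 0 1 = vv (int m)" using Suc m X_def by auto
  have t: "take (Suc m) as = take m as @ [as ! m]" using m by (simp add: take_Suc_conv_app_nth)
  have XS: "foldr (\<lambda>a B. lls_E a ** B) (take (Suc m) as) (mat 1) = X ** lls_E (as ! m)"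
    unfolding t X_def by (rule foldr_snoc)
  have r1: "(X ** lls_E (as ! m)) *v vec2 1 0 = vv (int m)"
    unfolding matrix_vector_mul_assoc[symmetric] E_e1 IH by simp
  have bb: "bs as (int m + 1) = as ! m" using bs_val m by simp
  have "(X ** lls_E (as ! m)) *v vec2 0 1 = vv (int m - 1) + real (as ! m) *\<^sub>R vv (int m)"
    unfolding matrix_vector_mul_assoc[symmetric] E_e2 matrix_vector_right_distrib matrix_vector_mult_scaleR IH by simp
  also have "\<dots> = vv (int m + 1)" using vv(3)[of "int m"] bb by simp
  finally have r2: "(X ** lls_E (as ! m)) *v vec2 0 1 = vv (int m + 1)" .
  have e: "int (Suc m) = int m + 1" by simp
  have e2: "int m + 1 - 1 = int m" by simp
  show ?case unfolding XS e e2 using r1 r2 by blast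
qed

lemma M_Mop: "lls_matrix as *v x = Mop x"
proof -
  have "lls_matrix as = foldr (\<lambda>a B. lls_E a ** B) (take (length as) as) (mat 1)"
    by (simp add: lls_matrix_def)
  then have "lls_matrix as *v vec2 1 0 = p0" "lls_matrix as *v vec2 0 1 = r0"
    using prefix[of "length as"] by (simp_all add: p0_def r0_def)
  then show ?thesis by (subst mv_lin) (simp add: Mop_def)
qed

lemma main: "lls_period (lls_matrix as) as"
proof -
  let ?M = "lls_matrix as"
  let ?A = "\<lambda>k. vv (2*k)"
  let ?n = "length as"
  have eu: "?M *v u_ang = mu *\<^sub>R u_ang"
    unfolding M_Mop by (rule eig_phi0) (simp add: u_ang_def phi_def)
  have ew: "?M *v w_ang = nu *\<^sub>R w_ang"
    unfolding M_Mop by (rule eig_psi0) (use a1_gt in \<open>simp add: w_ang_def psi_def\<close>)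
  have unz: "u_ang \<noteq> 0" by (auto simp: u_ang_def vec2_eq_iff)
  have wnz: "w_ang \<noteq> 0" by (auto simp: w_ang_def vec2_eq_iff)
  have numu: "nu \<noteq> mu" using nu_gt1 mu_abs by auto
  have eig: "distinct_irrational_real_eigenvalues ?M"
    unfolding distinct_irrational_real_eigenvalues_def
    using numu nu_irr mu_irr ew eu unz wnz by blast
  have duw: "det2 u_ang w_ang = - (1 + bm * a1)" by (simp add: u_ang_def w_ang_def)
  have P: "1 + bm * a1 > 0" using bm_gt a1_gt by (simp add: add_pos_pos)
  have assoc: "associated_angle ?M u_ang w_ang"
    unfolding associated_angle_def using duw P eu ew by auto
  have bij: "bij_betw ?A UNIV (sail_vertices u_ang w_ang)"
    unfolding sv_eq using A_inj by (simp add: bij_betw_def)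
  have orient: "\<forall>k. 0 < det2 u_ang w_ang * det2 (?A k) (?A (k+1))"
  proof
    fix k
    have "2 * (k+1) = 2*k+(2::int)" by simp
    then have "det2 (?A k) (?A (k+1)) = - real (bs as (2*k+2))" using det_A[of k] by (simp del: det2_simps)
    moreover have "real (bs as (2*k+2)) > 0" using bpos by (simp add: Suc_le_lessD)
    ultimately have "det2 u_ang w_ang * det2 (?A k) (?A (k+1)) = (1 + bm * a1) * real (bs as (2*k+2))"
      and "real (bs as (2*k+2)) > 0" unfolding duw by (simp_all del: det2_simps add: algebra_simps)
    then show "0 < det2 u_ang w_ang * det2 (?A k) (?A (k+1))" using P by simp
  qed
  have sp: "sail_param u_ang w_ang ?A" unfolding sail_param_def using bij orient by blast
  have shift: "\<forall>k. (?M ** ?M) *v ?A k = ?A (k + int ?n)"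
  proof
    fix k
    have "(?M ** ?M) *v ?A k = ?M *v (?M *v ?A k)" by (simp add: matrix_vector_mul_assoc)
    also have "\<dots> = vv (2*k + int ?n + int ?n)" unfolding M_Mop vper[symmetric] by simp
    also have "\<dots> = ?A (k + int ?n)" by (simp add: algebra_simps)
    finally show "(?M ** ?M) *v ?A k = ?A (k + int ?n)" .
  qed
  have dnz: "int ?n \<noteq> 0" using ne by simp
  have len: "length as = nat \<bar>int ?n\<bar>" by simp
  have vals: "\<forall>i < length as. lls ?A (-1 + int i) = real (as ! i)"
  proof (intro allI impI)
    fix i assume i: "i < length as"
    have "lls ?A (-1 + int i) = real (bs as (-1 + int i + 2))" by (rule lls_A)
    also have "-1 + int i + 2 = int i + 1" by simp
    finally show "lls ?A (-1 + int i) = real (as ! i)" using bs_val[OF i] by simp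
  qed
  show ?thesis unfolding lls_period_def
    using eig assoc sp dnz shift len vals by blast
qed

end

theorem theorem2:
  fixes as :: "nat list"
  assumes "as \<noteq> []"
    and "\<forall>a \<in> set as. 0 < a"
  shows "lls_period (lls_matrix as) as"
proof -
  interpret lseq as by (rule lseq.intro) (use assms in auto)
  show ?thesis by (rule main)
qed

end
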